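(* Let $m$ be a non-negative integer, let $A$ be a $k$-tuple of elements of $\mathbb{Z}/m\mathbb{Z}$ and let $\lambda,p$ be positive integers with $k\mid p$. Then the orbit of $S=\mathrm{IAP}(A,AX_k)$ is $(p,\lambda p)$-periodic if and only if $\pi_{m/\gcd(p/k,m)}(AX_k)=0$ and $A\in\mathrm{Lker}_m M_k^{(\lambda p)}$, where $M_k^{(\lambda p)}=W_k^{(\lambda p)}+X_kT_k^{(\lambda p)}$ and $W_k^{(\lambda p)}=C_k^{(\lambda p)}+(-1)^{\lambda p+1}I_k$.
   Context: $\mathbb{Z}/0\mathbb{Z}=\mathbb{Z}$. For $d\mid m$, $\pi_d$ is reduction from $\mathbb{Z}/m\mathbb{Z}$ to $\mathbb{Z}/d\mathbb{Z}$, entrywise. Tuples are row vectors and integer matrices act after reduction mod $m$. $X_k=(\delta_{r,s}+\delta_{r,k-s+1})_{1\le r,s\le k}$. For $k$-tuples $A=(a_0,\dots,a_{k-1})$, $D=(d_0,\dots,d_{k-1})$, $\mathrm{IAP}(A,D)=(u_j)_{j\in\mathbb{Z}}$ with $u_{qk+r}=a_r+qd_r$. The orbit of $(u_j)_{j\in\mathbb{Z}}$ is $(a_{i,j})_{(i,j)\in\mathbb{N}\times\mathbb{Z}}$ with $a_{0,j}=u_j$, $a_{i,j}=-a_{i-1,j}-a_{i-1,j+1}$; it is $(p,q)$-periodic if $a_{i+q,j}=a_{i,j+p}=a_{i,j}$ for all $(i,j)$. $C_k^{(i)}=\big(\sum_{\alpha\in\mathbb{Z}}\binom{i}{\alpha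 k+r-s}\big)_{1\le r,s\le k}$, $T_k^{(i)}=\big(\sum_{\alpha\in\mathbb{Z}}\alpha\binom{i}{\alpha k+r-s}\big)_{1\le r,s\le k}$ with $\binom{a}{b}=0$ if $b<0$ or $b>a$. $\mathrm{Lker}_m M=\{X\in(\mathbb{Z}/m\mathbb{Z})^{n}: X\pi_m(M)=0\}$. *)

theory Defs
  imports "HOL-Number_Theory.Number_Theory"
begin

text \<open>Elements of Z/mZ are represented by integers; equality in Z/mZ is
  congruence modulo m (for m = 0 this is equality in Z). A k-tuple is a function
  nat => int, entries indexed 0..k-1; a k x k matrix is nat => nat => int,
  entries indexed 0..k-1 (so the paper's index r corresponds to r-1 here).\<close>

definition matX :: "nat \<Rightarrow> nat \<Rightarrow> nat \<Rightarrow> int" where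
  "matX k r s = (if r = s then 1 else 0) + (if r = k - 1 - s then 1 else 0)"

definition matI :: "nat \<Rightarrow> nat \<Rightarrow> int" where
  "matI r s = (if r = s then 1 else 0)"

definition vecmat :: "nat \<Rightarrow> (nat \<Rightarrow> int) \<Rightarrow> (nat \<Rightarrow> nat \<Rightarrow> int) \<Rightarrow> nat \<Rightarrow> int" where
  "vecmat k A M s = (\<Sum>r<k. A r * M r s)"

definition matmul :: "nat \<Rightarrow> (nat \<Rightarrow> nat \<Rightarrow> int) \<Rightarrow> (nat \<Rightarrow> nat \<Rightarrow> int) \<Rightarrow> nat \<Rightarrow> nat \<Rightarrow> int" where
  "matmul k M N r s = (\<Sum>t<k. M r t * N t s)"

definition binz :: "nat \<Rightarrow> int \<Rightarrow> int" where
  "binz i b = (if 0 \<le> b \<and> b \<le> int i then int (i choose nat b) else 0)"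

text \<open>C_k^(i) and T_k^(i): the sums over alpha in Z are taken over the (finite, for k > 0)
  set of alpha for which the binomial coefficient can be nonzero; all other terms vanish.\<close>
definition matC :: "nat \<Rightarrow> nat \<Rightarrow> nat \<Rightarrow> nat \<Rightarrow> int" where
  "matC k i r s = (\<Sum>\<alpha> \<in> {\<alpha>::int. 0 \<le> \<alpha> * int k + int r - int s \<and> \<alpha> * int k + int r - int s \<le> int i}.
                      binz i (\<alpha> * int k + int r - int s))"

definition matT :: "nat \<Rightarrow> nat \<Rightarrow> nat \<Rightarrow> nat \<Rightarrow> int" where
  "matT k i r s = (\<Sum>\<alpha> \<in> {\<alpha>::int. 0 \<le> \<alpha> * int k + int r - int s \<and> \<alpha> * int k + int r - int s \<le> int i}.
                      \<alpha> * binz i (\<alpha> * int k + int r - int s))"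

definition matW :: "nat \<Rightarrow> nat \<Rightarrow> nat \<Rightarrow> nat \<Rightarrow> int" where
  "matW k i r s = matC k i r s + (-1) ^ (i + 1) * matI r s"

definition matM :: "nat \<Rightarrow> nat \<Rightarrow> nat \<Rightarrow> nat \<Rightarrow> int" where
  "matM k i r s = matW k i r s + matmul k (matX k) (matT k i) r s"

definition in_Lker :: "nat \<Rightarrow> nat \<Rightarrow> (nat \<Rightarrow> nat \<Rightarrow> int) \<Rightarrow> (nat \<Rightarrow> int) \<Rightarrow> bool" where
  "in_Lker m k M X \<longleftrightarrow> (\<forall>s<k. [vecmat k X M s = 0] (mod int m))"

definition IAP :: "nat \<Rightarrow> (nat \<Rightarrow> int) \<Rightarrow> (nat \<Rightarrow> int) \<Rightarrow> int \<Rightarrow> int" where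
  "IAP k A D j = A (nat (j mod int k)) + (j div int k) * D (nat (j mod int k))"

fun orbit :: "(int \<Rightarrow> int) \<Rightarrow> nat \<Rightarrow> int \<Rightarrow> int" where
  "orbit u 0 j = u j"
| "orbit u (Suc i) j = - orbit u i j - orbit u i (j + 1)"

definition orbit_periodic :: "nat \<Rightarrow> (int \<Rightarrow> int) \<Rightarrow> nat \<Rightarrow> nat \<Rightarrow> bool" where
  "orbit_periodic m u p q \<longleftrightarrow>
     (\<forall>i j. [orbit u (i + q) j = orbit u i j] (mod int m) \<and>
            [orbit u i (j + int p) = orbit u i j] (mod int m))"

end

theory Submission
  imports Defs
begin



lemma orbit_add: "orbit (\<lambda>x. v x + w x) i j = orbit v i j + orbit w i j"
  by (induction i arbitrary: j) auto

lemma orbit_shift: "orbit (\<lambda>x. v (x + c)) i j = orbit v i (j + c)"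
  by (induction i arbitrary: j) (auto simp: algebra_simps)

lemma orbit_comp: "orbit (orbit v n) i j = orbit v (n + i) j"
  by (induction i arbitrary: j) auto

lemma orbit_cong:
  assumes "\<And>j. (M::int) dvd (v j - w j)"
  shows "M dvd (orbit v i j - orbit w i j)"
proof (induction i arbitrary: j)
  case 0 then show ?case using assms by simp
next
  case (Suc i)
  have "orbit v (Suc i) j - orbit w (Suc i) j
     = - ((orbit v i j - orbit w i j) + (orbit v i (j+1) - orbit w i (j+1)))" by simp
  then show ?case using Suc[of j] Suc[of "j+1"] by (metis dvd_add dvd_minus_iff)
qed

lemma orbit_per:
  assumes "\<And>j. (M::int) dvd (v (j + c) - v j)"
  shows "M dvd (orbit v i (j + c) - orbit v i j)"
  using orbit_cong[of M "\<lambda>x. v (x + c)" v i j] assms by (simp add: orbit_shift)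

lemma orbit_per_mult:
  assumes "\<And>j. (M::int) dvd (f (j + c) - f j)"
  shows "M dvd (f (j + int n * c) - f j)"
proof (induction n)
  case 0 then show ?case by simp
next
  case (Suc n)
  have "f (j + int (Suc n) * c) - f j = (f ((j + int n * c) + c) - f (j + int n * c)) + (f (j + int n * c) - f j)"
    by (simp add: algebra_simps)
  then show ?case using Suc assms by (metis dvd_add)
qed

lemma orbit_antisym:
  assumes "\<And>j. v (-1 - j) = - v j"
  shows "orbit v i (-1 - int i - j) = - orbit v i j"
proof (induction i arbitrary: j)
  case 0 then show ?case using assms by simp
next
  case (Suc i)
  have e1: "-1 - int (Suc i) - j = -1 - int i - (j + 1)" by simp
  have e2: "-1 - int i - (j + 1) + 1 = -1 - int i - j" by simp
  have "orbit v (Suc i) (-1 - int (Suc i) - j) = - orbit v i (-1 - int (Suc i) - j) - orbit v i (-1 - int (Suc i) - j + 1)"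
    by (simp only: orbit.simps)
  then have "orbit v (Suc i) (-1 - int (Suc i) - j) = - orbit v i (-1 - int i - (j + 1)) - orbit v i (-1 - int i - j)"
    by (simp only: e1 e2)
  then show ?case using Suc[of j] Suc[of "j+1"] by simp
qed

lemma orbit_closed:
  "orbit v i j = (-1)^i * (\<Sum>l\<le>i. int (i choose l) * v (j + int l))"
proof (induction i arbitrary: j)
  case 0 then show ?case by simp
next
  case (Suc i)
  let ?f = "\<lambda>l. v (j + int l)"
  have key: "(\<Sum>l\<le>Suc i. int (Suc i choose l) * ?f l)
       = (\<Sum>l\<le>i. int (i choose l) * ?f l) + (\<Sum>l\<le>i. int (i choose l) * ?f (Suc l))"
  proof -
    have "(\<Sum>l\<le>Suc i. int (Suc i choose l) * ?f l) = ?f 0 + (\<Sum>l\<le>i. int (Suc i choose Suc l) * ?f (Suc l))"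
      by (subst sum.atMost_Suc_shift) simp
    also have "\<dots> = ?f 0 + (\<Sum>l\<le>i. int (i choose l) * ?f (Suc l)) + (\<Sum>l\<le>i. int (i choose Suc l) * ?f (Suc l))"
      by (simp add: sum.distrib algebra_simps)
    also have "(\<Sum>l\<le>i. int (i choose Suc l) * ?f (Suc l)) = (\<Sum>l\<le>Suc i. int (i choose l) * ?f l) - ?f 0"
      by (simp only: sum.atMost_Suc_shift) simp
    also have "(\<Sum>l\<le>Suc i. int (i choose l) * ?f l) = (\<Sum>l\<le>i. int (i choose l) * ?f l)"
      by simp
    finally show ?thesis by simp
  qed
  have "(\<Sum>l\<le>i. int (i choose l) * ?f (Suc l)) = (\<Sum>l\<le>i. int (i choose l) * v (j + 1 + int l))"
    by (simp add: algebra_simps)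
  then show ?case using key Suc[of j] Suc[of "j+1"] by (simp add: algebra_simps)
qed

lemma per_mod:
  assumes "(k::int) > 0" "\<And>j. (M::int) dvd (f (j + k) - f j)"
  shows "M dvd (f j - f (j mod k))"
proof -
  have "M dvd (f (x + t * k) - f x)" for x t
  proof (induction t rule: int_induct[where k=0])
    case base then show ?case by simp
  next
    case (step1 t)
    have "f (x + (t+1) * k) - f x = (f ((x + t*k) + k) - f (x + t*k)) + (f (x + t*k) - f x)"
      by (simp add: algebra_simps)
    then show ?case using step1 assms(2) by (metis dvd_add)
  next
    case (step2 t)
    have "f (x + (t-1) * k) - f x = (f (x + t*k) - f x) - (f ((x + (t-1)*k) + k) - f (x + (t-1)*k))"
      by (simp add: algebra_simps)
    then show ?case using step2 assms(2) by (metis dvd_diff)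
  qed
  from this[of "j mod k" "j div k"] show ?thesis
    by (metis dvd_minus_iff minus_diff_eq mod_div_mult_eq)
qed



lemma iap_lt: "s < k \<Longrightarrow> IAP k A D (int s) = A s"
  by (simp add: IAP_def)

lemma iap_shiftk: "k > 0 \<Longrightarrow> IAP k A D (j + int k) = IAP k A D j + D (nat (j mod int k))"
  by (simp add: IAP_def algebra_simps)

lemma iap_shiftp:
  assumes "k dvd p"
  shows "IAP k A D (j + int p) - IAP k A D j = int (p div k) * D (nat (j mod int k))"
proof (cases "k = 0")
  case True then show ?thesis using assms by (simp add: IAP_def)
next
  case False
  obtain c where p: "p = k * c" using assms by blast
  have "j + int p = j + int c * int k" using p by simp
  then show ?thesis using False p by (simp add: IAP_def algebra_simps)
qed

lemma vecmat_X: "s < k \<Longrightarrow> vecmat k A (matX k) s = A s + A (k - 1 - s)"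
proof -
  assume s: "s < k"
  have "vecmat k A (matX k) s = (\<Sum>r<k. A r * (if r = s then 1 else 0)) + (\<Sum>r<k. A r * (if r = k - 1 - s then 1 else 0))"
    by (simp add: vecmat_def matX_def sum.distrib algebra_simps)
  also have "\<dots> = A s + A (k - 1 - s)" using s
    by (simp add: if_distrib cong: if_cong)
  finally show ?thesis .
qed

lemma iap_antisym:
  assumes k: "k > 0" and D: "\<And>s. s < k \<Longrightarrow> D s = A s + A (k - 1 - s)"
  shows "IAP k A D (-1 - j) = - IAP k A D j"
proof -
  define r where "r = j mod int k"
  define q where "q = j div int k"
  have r0: "0 \<le> r" "r < int k" using k by (auto simp: r_def)
  have j: "j = r + q * int k" by (simp add: r_def q_def)
  have e: "-1 - j = (int k - 1 - r) + (- q - 1) * int k" using j by (simp add: algebra_simps)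
  have m: "(-1 - j) mod int k = int k - 1 - r"
    unfolding e mod_mult_self1 using r0 by simp
  have d: "(-1 - j) div int k = - q - 1"
    unfolding e using r0 k by (simp add: div_pos_pos_trivial)
  have nr: "nat r < k" using r0 by simp
  have kr: "nat (int k - 1 - r) = k - 1 - nat r" using r0 by simp
  have kk: "k - 1 - (k - 1 - nat r) = nat r" using nr by simp
  have "IAP k A D (-1 - j) = A (k - 1 - nat r) + (- q - 1) * D (k - 1 - nat r)"
    by (simp add: IAP_def m d kr)
  also have "D (k - 1 - nat r) = A (k - 1 - nat r) + A (nat r)" using D[of "k - 1 - nat r"] nr kk by simp
  also have "D (nat r) = A (nat r) + A (k - 1 - nat r)" using D nr by simp
  then have "- IAP k A D j = - (A (nat r) + q * (A (nat r) + A (k - 1 - nat r)))"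
    by (simp add: IAP_def r_def q_def)
  ultimately show ?thesis by (simp add: algebra_simps)
qed



lemma S_fin:
  assumes k: "k > 0" and r: "r < k"
  shows "finite {\<alpha>::int. 0 \<le> \<alpha> * int k + int r - int s \<and> \<alpha> * int k + int r - int s \<le> int N}"
proof (rule finite_subset[of _ "{0..int N + int s}"])
  show "{\<alpha>::int. 0 \<le> \<alpha> * int k + int r - int s \<and> \<alpha> * int k + int r - int s \<le> int N} \<subseteq> {0..int N + int s}"
  proof
    fix \<alpha> assume "\<alpha> \<in> {\<alpha>::int. 0 \<le> \<alpha> * int k + int r - int s \<and> \<alpha> * int k + int r - int s \<le> int N}"
    then have a1: "0 \<le> \<alpha> * int k + int r - int s" and a2: "\<alpha> * int k + int r - int s \<le> int N" by auto
    have "\<alpha> \<ge> 0"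
    proof (rule ccontr)
      assume "\<not> \<alpha> \<ge> 0"
      then have "\<alpha> \<le> -1" by simp
      then have "\<alpha> * int k \<le> -1 * int k" by (rule mult_right_mono) simp
      then show False using a1 r by simp
    qed
    moreover have "\<alpha> \<le> \<alpha> * int k" using \<open>\<alpha> \<ge> 0\<close> k
      by (metis mult.right_neutral mult_left_mono int_one_le_iff_zero_less of_nat_0_less_iff)
    ultimately show "\<alpha> \<in> {0..int N + int s}" using a2 by simp
  qed
qed simp

lemma comb:
  assumes k: "k > 0" and s: "s < k"
  shows "(\<Sum>l\<le>N. int (N choose l) * IAP k A D (int s + int l))
       = vecmat k A (matC k N) s + vecmat k D (matT k N) s"
proof -
  define S where "S r = {\<alpha>::int. 0 \<le> \<alpha> * int k + int r - int s \<and> \<alpha> * int k + int r - int s \<le> int N}" for r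
  define g where "g = (\<lambda>(r::nat, \<alpha>::int). binz N (\<alpha> * int k + int r - int s) * (A r + \<alpha> * D r))"
  have fin: "\<forall>r\<in>{..<k}. finite (S r)" using S_fin[OF k] by (auto simp: S_def)
  have "vecmat k A (matC k N) s + vecmat k D (matT k N) s
      = (\<Sum>r<k. \<Sum>\<alpha>\<in>S r. g (r, \<alpha>))"
    by (simp add: vecmat_def matC_def matT_def S_def g_def sum_distrib_left sum.distrib[symmetric]
        algebra_simps)
  also have "\<dots> = (\<Sum>x\<in>Sigma {..<k} S. g x)"
    using fin by (subst sum.Sigma) auto
  also have "\<dots> = (\<Sum>l\<le>N. int (N choose l) * IAP k A D (int s + int l))"
  proof (rule sum.reindex_bij_witness[where i = "\<lambda>l. (nat ((int s + int l) mod int k), (int s + int l) div int k)"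
        and j = "\<lambda>(r, \<alpha>). nat (\<alpha> * int k + int r - int s)"])
    fix a assume a: "a \<in> Sigma {..<k} S"
    obtain r \<alpha> where ra: "a = (r, \<alpha>)" by (cases a)
    have r: "r < k" and b1: "0 \<le> \<alpha> * int k + int r - int s" and b2: "\<alpha> * int k + int r - int s \<le> int N"
      using a ra by (auto simp: S_def)
    have e: "int s + int (nat (\<alpha> * int k + int r - int s)) = int r + \<alpha> * int k" using b1 by simp
    have em: "(int s + int (nat (\<alpha> * int k + int r - int s))) mod int k = int r"
      unfolding e mod_mult_self1 using r by simp
    have ed: "(int s + int (nat (\<alpha> * int k + int r - int s))) div int k = \<alpha>"
      unfolding e using r k by simp
    show "(\<lambda>l. (nat ((int s + int l) mod int k), (int s + int l) div int k)) ((\<lambda>(r, \<alpha>). nat (\<alpha> * int k + int r - int s)) a) = a"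
      using ra em ed by simp
    show "(\<lambda>(r, \<alpha>). nat (\<alpha> * int k + int r - int s)) a \<in> {..N}" using ra b2 by auto
    show "int (N choose (\<lambda>(r, \<alpha>). nat (\<alpha> * int k + int r - int s)) a) * IAP k A D (int s + int ((\<lambda>(r, \<alpha>). nat (\<alpha> * int k + int r - int s)) a)) = g a"
      using ra em ed b1 b2 by (simp add: g_def binz_def IAP_def)
  next
    fix l assume l: "l \<in> {..N}"
    define r where "r = (int s + int l) mod int k"
    define \<alpha> where "\<alpha> = (int s + int l) div int k"
    have r0: "0 \<le> r" "r < int k" using k by (auto simp: r_def)
    have e: "\<alpha> * int k + r = int s + int l" by (simp add: r_def \<alpha>_def)
    show "(\<lambda>(r, \<alpha>). nat (\<alpha> * int k + int r - int s)) ((\<lambda>l. (nat ((int s + int l) mod int k), (int s + int l) div int k)) l) = l"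
      using e r0 by (simp add: r_def[symmetric] \<alpha>_def[symmetric])
    show "(\<lambda>l. (nat ((int s + int l) mod int k), (int s + int l) div int k)) l \<in> Sigma {..<k} S"
      using e r0 l by (auto simp: r_def[symmetric] \<alpha>_def[symmetric] S_def)
  qed
  finally show ?thesis by simp
qed



lemma vecmat_M:
  assumes s: "s < k"
  shows "vecmat k A (matM k N) s = vecmat k A (matC k N) s + (-1)^(N+1) * A s
           + vecmat k (vecmat k A (matX k)) (matT k N) s"
proof -
  have I: "(\<Sum>r<k. A r * matI r s) = A s" using s by (simp add: matI_def if_distrib cong: if_cong)
  have X: "(\<Sum>r<k. A r * (\<Sum>t<k. matX k r t * matT k N t s)) = (\<Sum>t<k. (\<Sum>r<k. A r * matX k r t) * matT k N t s)"
  proof -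
    have "(\<Sum>r<k. A r * (\<Sum>t<k. matX k r t * matT k N t s)) = (\<Sum>r<k. \<Sum>t<k. A r * matX k r t * matT k N t s)"
      by (simp add: sum_distrib_left mult.assoc)
    also have "\<dots> = (\<Sum>t<k. \<Sum>r<k. A r * matX k r t * matT k N t s)" by (rule sum.swap)
    also have "\<dots> = (\<Sum>t<k. (\<Sum>r<k. A r * matX k r t) * matT k N t s)"
      by (simp add: sum_distrib_right)
    finally show ?thesis .
  qed
  have "vecmat k A (matM k N) s = (\<Sum>r<k. A r * matC k N r s) + (-1)^(N+1) * (\<Sum>r<k. A r * matI r s)
        + (\<Sum>r<k. A r * (\<Sum>t<k. matX k r t * matT k N t s))"
  proof -
    have "vecmat k A (matM k N) s = (\<Sum>r<k. A r * matC k N r s + (-1)^(N+1) * (A r * matI r s)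
        + A r * (\<Sum>t<k. matX k r t * matT k N t s))"
      unfolding vecmat_def matM_def matW_def matmul_def by (intro sum.cong refl) (simp add: algebra_simps)
    also have "\<dots> = (\<Sum>r<k. A r * matC k N r s) + (-1)^(N+1) * (\<Sum>r<k. A r * matI r s)
        + (\<Sum>r<k. A r * (\<Sum>t<k. matX k r t * matT k N t s))"
      by (simp only: sum.distrib sum_distrib_left)
    finally show ?thesis .
  qed
  then show ?thesis using I X by (simp add: vecmat_def)
qed

lemma orbit_M:
  assumes k: "k > 0" and s: "s < k"
  shows "orbit (IAP k A (vecmat k A (matX k))) N (int s) - IAP k A (vecmat k A (matX k)) (int s)
       = (-1)^N * vecmat k A (matM k N) s"
proof -
  let ?D = "vecmat k A (matX k)"
  have "orbit (IAP k A ?D) N (int s) = (-1)^N * (vecmat k A (matC k N) s + vecmat k ?D (matT k N) s)"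
    using comb[OF k s, of N A ?D] by (simp add: orbit_closed)
  moreover have "(-1::int)^N * (-1)^(N+1) = -1"
  proof -
    have "(-1::int)^N * (-1)^(N+1) = - (((-1)*(-1))^N)" by (simp add: power_mult_distrib)
    then show ?thesis by simp
  qed
  ultimately show ?thesis using iap_lt[OF s] by (simp add: vecmat_M[OF s] algebra_simps)
qed

lemma gcd_fwd:
  assumes c: "c > 0" and d: "int m dvd int c * x"
  shows "int (m div gcd c m) dvd x"
proof -
  define g where "g = gcd c m"
  have g0: "g > 0" using c by (simp add: g_def)
  have cop: "coprime (m div g) (c div g)" using c unfolding g_def
    by (metis div_gcd_coprime gcd.commute gr_implies_not0)
  have "int (m div g) * int g dvd int (c div g) * x * int g"
    using d by (simp add: g_def algebra_simps flip: of_nat_mult)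
  then have "int (m div g) dvd int (c div g) * x" using g0 by simp
  moreover have "coprime (int (m div g)) (int (c div g))" using cop by simp
  ultimately show ?thesis unfolding g_def by (meson coprime_dvd_mult_right_iff)
qed

lemma gcd_bwd:
  assumes d: "int (m div gcd c m) dvd x"
  shows "int m dvd int c * x"
proof -
  define g where "g = gcd c m"
  have "m = m div g * g" by (simp add: g_def)
  then have e: "int m = int (m div g) * int g" by (metis of_nat_mult)
  have "int g dvd int c" by (simp add: g_def)
  then have "int (m div g) * int g dvd x * int c" using d g_def mult_dvd_mono by blast
  then show ?thesis using e by (simp add: mult.commute)
qed



theorem theorem6:
  fixes m k p lam :: nat and A :: "nat \<Rightarrow> int"
  assumes "lam > 0" and "p > 0" and "k dvd p"
  shows "orbit_periodic m (IAP k A (vecmat k A (matX k))) p (lam * p) \<longleftrightarrow>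
         ((\<forall>s<k. [vecmat k A (matX k) s = 0] (mod int (m div gcd (p div k) m))) \<and>
          in_Lker m k (matM k (lam * p)) A)"
proof -
  define D where "D = vecmat k A (matX k)"
  define u where "u = IAP k A D"
  define N where "N = lam * p"
  define c where "c = p div k"
  have k: "k > 0" using assms by (metis dvd_0_left_iff gr0I less_not_refl)
  have c0: "c > 0" using assms k by (auto simp: c_def elim!: dvdE)
  have hp: "u (j + int p) - u j = int c * D (nat (j mod int k))" for j
    unfolding u_def c_def by (rule iap_shiftp[OF assms(3)])
  have antiu: "u (-1 - j) = - u j" for j
    unfolding u_def by (rule iap_antisym[OF k]) (simp add: D_def vecmat_X)
  have EM: "orbit u N (int s) - u (int s) = (-1)^N * vecmat k A (matM k N) s" if "s < k" for s
    unfolding u_def D_def using orbit_M[OF k that] by simp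
  have cong_eq: "[a = b] (mod int m) \<longleftrightarrow> int m dvd (a - b)" for a b :: int
    by (rule cong_iff_dvd_diff)
  show ?thesis
    unfolding D_def[symmetric] u_def[symmetric] N_def[symmetric] c_def[symmetric]
  proof
    assume per: "orbit_periodic m u p N"
    have c1: "[D s = 0] (mod int (m div gcd c m))" if s: "s < k" for s
    proof -
      have "int m dvd (orbit u 0 (int s + int p) - orbit u 0 (int s))"
        using per unfolding orbit_periodic_def cong_eq by blast
      then have "int m dvd int c * D s" using hp[of "int s"] s by simp
      then show ?thesis using gcd_fwd[OF c0] by (simp add: cong_0_iff)
    qed
    have "in_Lker m k (matM k N) A"
      unfolding in_Lker_def
    proof (intro allI impI)
      fix s assume s: "s < k"
      have "int m dvd (orbit u (0 + N) (int s) - orbit u 0 (int s))"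
        using per unfolding orbit_periodic_def cong_eq by blast
      then have "int m dvd (-1)^N * vecmat k A (matM k N) s" using EM[OF s] by simp
      then have "int m dvd (-1)^N * ((-1)^N * vecmat k A (matM k N) s)" by (rule dvd_mult)
      moreover have "(-1::int)^N * (-1)^N = 1" by (simp flip: power_mult_distrib)
      ultimately show "[vecmat k A (matM k N) s = 0] (mod int m)"
        by (simp add: cong_0_iff mult.assoc[symmetric])
    qed
    then show "(\<forall>s<k. [D s = 0] (mod int (m div gcd c m))) \<and> in_Lker m k (matM k N) A"
      using c1 by blast
  next
    assume h: "(\<forall>s<k. [D s = 0] (mod int (m div gcd c m))) \<and> in_Lker m k (matM k N) A"
    have P: "int m dvd (u (j + int p) - u j)" for j
    proof -
      have "nat (j mod int k) < k" using k by (simp add: nat_less_iff)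
      then have "int (m div gcd c m) dvd D (nat (j mod int k))" using h by (simp add: cong_0_iff)
      then show ?thesis using hp gcd_bwd by metis
    qed
    have Pi: "int m dvd (orbit u i (j + int p) - orbit u i j)" for i j
      by (rule orbit_per[of "int m" u "int p"]) (rule P)
    have PN: "int m dvd (orbit u i (j + int N) - orbit u i j)" for i j
      using orbit_per_mult[of "int m" "orbit u i" "int p" j lam, OF Pi] by (simp add: N_def)
    define E where "E j = orbit u N j - u j" for j
    define d' where "d' j = D (nat (j mod int k))" for j
    define F where "F j = orbit d' N j - d' j" for j
    have E0: "int m dvd E (int s)" if "s < k" for s
      using h that EM[OF that] unfolding E_def in_Lker_def by (simp add: cong_0_iff)
    have ush: "(\<lambda>x. u (x + int k)) = (\<lambda>x. u x + d' x)"
      unfolding u_def d'_def using iap_shiftk[OF k] by auto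
    have Esh: "E (j + int k) = E j + F j" for j
    proof -
      have "orbit u N (j + int k) = orbit (\<lambda>x. u (x + int k)) N j" by (simp add: orbit_shift)
      also have "\<dots> = orbit u N j + orbit d' N j" by (simp add: ush orbit_add)
      finally show ?thesis unfolding E_def F_def using fun_cong[OF ush, of j] by simp
    qed
    have dsh: "(\<lambda>x. d' (x + int k)) = d'" unfolding d'_def by simp
    have Fper: "F (j + int k) = F j" for j
    proof -
      have "orbit d' N (j + int k) = orbit (\<lambda>x. d' (x + int k)) N j" by (simp add: orbit_shift)
      then show ?thesis unfolding F_def using fun_cong[OF dsh, of j] dsh by simp
    qed
    have Eanti: "int m dvd (E (-1 - j) + E j)" for j
    proof -
      have a: "orbit u N (-1 - int N - j) = - orbit u N j" by (rule orbit_antisym) (rule antiu)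
      have "int m dvd (orbit u N ((-1 - int N - j) + int N) - orbit u N (-1 - int N - j))" by (rule PN)
      then have "int m dvd (orbit u N (-1 - j) + orbit u N j)" using a by simp
      then show ?thesis unfolding E_def using antiu[of j] by (simp add: algebra_simps)
    qed
    have F0: "int m dvd F (int r)" if r: "r < k" for r
    proof -
      define j0 where "j0 = int k - 1 - int r"
      have "j0 = int (k - 1 - r)" using r by (simp add: j0_def)
      then have "int m dvd E j0" using E0[of "k - 1 - r"] k by simp
      then have "int m dvd E (-1 - j0)" using Eanti[of j0] by (metis dvd_add_left_iff)
      then have e1: "int m dvd E (int r - int k)" by (simp add: j0_def)
      have "E (int r) = E (int r - int k) + F (int r)"
        using Esh[of "int r - int k"] Fper[of "int r - int k"] by simp
      then show ?thesis using e1 E0[OF r] by (metis add_diff_cancel_left' dvd_diff)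
    qed
    have Fall: "int m dvd F j" for j
    proof -
      have "int m dvd (F j - F (j mod int k))" by (rule per_mod) (use k Fper in auto)
      moreover have "F (j mod int k) = F (int (nat (j mod int k)))" using k by simp
      moreover have "nat (j mod int k) < k" using k by (simp add: nat_less_iff)
      ultimately show ?thesis using F0 by (metis dvd_diff_left_iff)
    qed
    have Eall: "int m dvd E j" for j
    proof -
      have "int m dvd (E j - E (j mod int k))" by (rule per_mod) (use k Esh Fall in auto)
      moreover have "E (j mod int k) = E (int (nat (j mod int k)))" using k by simp
      moreover have "nat (j mod int k) < k" using k by (simp add: nat_less_iff)
      ultimately show ?thesis using E0 by (metis dvd_diff_left_iff)
    qed
    have V: "int m dvd (orbit u (i + N) j - orbit u i j)" for i j
    proof -
      have "orbit u (i + N) j = orbit (orbit u N) i j" by (simp add: orbit_comp add.commute)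
      moreover have "int m dvd (orbit (orbit u N) i j - orbit u i j)"
        by (rule orbit_cong) (use Eall in \<open>simp add: E_def\<close>)
      ultimately show ?thesis by simp
    qed
    show "orbit_periodic m u p N"
      unfolding orbit_periodic_def cong_eq using V Pi by blast
  qed
qed

end
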